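(* Let $\sigma$ be a filling of $\mathrm{dg}(\lambda)$, and let $i,r$ be such that the cells $(i,r),(i+1,r)$ lie in $\mathrm{dg}(\lambda)$, $\sigma(i,r)\ne\sigma(i+1,r)$, and $\sigma(i,s)=\sigma(i+1,s)$ for all $1\le s\le r-1$. Let $T$ be the triple formed by the cells $(i+1,r),(i,r),(i,r-1)$ (where $(i,0)$ is the basement cell with entry $\infty$). Then \[ \mathrm{inv}(\mathcal{T}_i^{(r)}(\sigma))=\begin{cases}\mathrm{inv}(\sigma)-1,& T\text{ counterclockwise in }\sigma,\\ \mathrm{inv}(\sigma)+1,&\text{otherwise.}\end{cases} \]
   Context: Diagrams and fillings: for a partition $\lambda=(\lambda_1\ge\dots\ge\lambda_n>0)$, $\mathrm{dg}(\lambda)$ is the set of cells $(i,r)$ with $1\le i\le n$, $1\le r\le\lambda_i$ (column $i$ from the left has $\lambda_i$ cells; rows counted from the bottom). A filling is a map $\sigma:\mathrm{dg}(\lambda)\to\mathbb{Z}_{>0}$. A basement row $0$ is adjoined with $\sigma(i,0)=\infty$. For $u<v$, $r\ge1$, $(v,r),(u,r)\in\mathrm{dg}(\lambda)$, the cells $(v,r),(u,r),(u,r-1)$ form a triple; with $a=\sigma(v,r),b=\sigma(u,r),c=\sigma(u,r-1)$ it is counterclockwise (an inversion triple) if $a<b\le c$ or $c<a<b$ or $b\le c<a$, and clockwise otherwise. $\mathrm{inv}(\sigma)$ is the number of inversion triples (including those with $r=1$). Operator $\mathcal{T}_i^{(r)}$ (defined when columns $i,i+1$ agree in rows $1,\dots,r-1$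 and differ in row $r$): (1) swap the entries of cells $(i,r)$ and $(i+1,r)$; (2) if the cells $(i+1,r+1),(i,r+1)$ do not both exist, stop; otherwise consider the triple $(i+1,r+1),(i,r+1),(i,r)$: if it was counterclockwise both before and after the last swap, or clockwise both before and after, stop; otherwise swap the entries of $(i,r+1)$ and $(i+1,r+1)$, replace $r$ by $r+1$ and repeat step (2). *)

theory Defs
  imports Main "HOL-Library.Extended_Nat"
begin

text \<open>A partition is a list lam = [lam_1,...,lam_n] of positive, weakly decreasing
  naturals. Column i (1-based) has lam_i cells; rows counted from 1 at the bottom.\<close>

definition is_partition :: "nat list \<Rightarrow> bool" where
  "is_partition lam \<longleftrightarrow> sorted_wrt (\<ge>) lam \<and> (\<forall>x\<in>set lam. 0 < x)"

definition dg :: "nat list \<Rightarrow> (nat \<times> nat) set" where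
  "dg lam = {(i, r). 1 \<le> i \<and> i \<le> length lam \<and> 1 \<le> r \<and> r \<le> lam ! (i - 1)}"

text \<open>A filling is a map sigma from cells to positive naturals (values outside
  the diagram are irrelevant). The basement row 0 carries the value infinity.\<close>

definition is_filling :: "nat list \<Rightarrow> (nat \<times> nat \<Rightarrow> nat) \<Rightarrow> bool" where
  "is_filling lam \<sigma> \<longleftrightarrow> (\<forall>c\<in>dg lam. 0 < \<sigma> c)"

definition val :: "(nat \<times> nat \<Rightarrow> nat) \<Rightarrow> nat \<times> nat \<Rightarrow> enat" where
  "val \<sigma> c = (if snd c = 0 then \<infinity> else enat (\<sigma> c))"

text \<open>Triple with entries a = sigma(v,r), b = sigma(u,r), c = sigma(u,r-1) is
  counterclockwise (an inversion triple).\<close>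

definition ccw :: "enat \<Rightarrow> enat \<Rightarrow> enat \<Rightarrow> bool" where
  "ccw a b c \<longleftrightarrow> (a < b \<and> b \<le> c) \<or> (c < a \<and> a < b) \<or> (b \<le> c \<and> c < a)"

definition inv_triples :: "nat list \<Rightarrow> (nat \<times> nat \<Rightarrow> nat) \<Rightarrow> (nat \<times> nat \<times> nat) set" where
  "inv_triples lam \<sigma> = {(u, v, r). u < v \<and> 1 \<le> r \<and> (v, r) \<in> dg lam \<and> (u, r) \<in> dg lam \<and>
       ccw (val \<sigma> (v, r)) (val \<sigma> (u, r)) (val \<sigma> (u, r - 1))}"

definition inv :: "nat list \<Rightarrow> (nat \<times> nat \<Rightarrow> nat) \<Rightarrow> nat" where
  "inv lam \<sigma> = card (inv_triples lam \<sigma>)"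

definition swap_cells :: "(nat \<times> nat \<Rightarrow> nat) \<Rightarrow> nat \<Rightarrow> nat \<Rightarrow> (nat \<times> nat \<Rightarrow> nat)" where
  "swap_cells \<sigma> i r = \<sigma>((i, r) := \<sigma> (i + 1, r), (i + 1, r) := \<sigma> (i, r))"

text \<open>Step (2) of the operator: sb is the filling before the last swap (performed in
  row r), sa the filling after it.\<close>

function T_loop :: "nat list \<Rightarrow> nat \<Rightarrow> (nat \<times> nat \<Rightarrow> nat) \<Rightarrow> (nat \<times> nat \<Rightarrow> nat) \<Rightarrow> nat
                     \<Rightarrow> (nat \<times> nat \<Rightarrow> nat)" where
  "T_loop lam i sb sa r =
     (if (i + 1, r + 1) \<notin> dg lam \<or> (i, r + 1) \<notin> dg lam then sa
      else if ccw (val sb (i + 1, r + 1)) (val sb (i, r + 1)) (val sb (i, r)) =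
              ccw (val sa (i + 1, r + 1)) (val sa (i, r + 1)) (val sa (i, r))
      then sa
      else T_loop lam i sa (swap_cells sa i (r + 1)) (r + 1))"
  by pat_completeness auto
termination
  by (relation "measure (\<lambda>(lam, i, sb, sa, r). lam ! (i - 1) - r)") (auto simp: dg_def)

definition T_op :: "nat list \<Rightarrow> nat \<Rightarrow> nat \<Rightarrow> (nat \<times> nat \<Rightarrow> nat) \<Rightarrow> (nat \<times> nat \<Rightarrow> nat)" where
  "T_op lam i r \<sigma> = T_loop lam i \<sigma> (swap_cells \<sigma> i r) r"

end

theory Submission imports Defs begin
definition ccwL :: "'a::linorder \<Rightarrow> 'a \<Rightarrow> 'a \<Rightarrow> bool" where
  "ccwL a b c \<longleftrightarrow> (a < b \<and> b \<le> c) \<or> (c < a \<and> a < b) \<or> (b \<le> c \<and> c < a)"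
lemma ccwL_alt: "ccwL a b c \<longleftrightarrow> (if a < b then \<not> (a \<le> c \<and> c < b) else if b < a then b \<le> c \<and> c < a else False)"
  unfolding ccwL_def by (cases a b rule: linorder_cases) auto
lemma ccwL_lem1:
  assumes "ccwL a b c \<noteq> ccwL a b d" shows "ccwL b a d = ccwL a b c"
  using assms unfolding ccwL_alt by (cases a b rule: linorder_cases) auto
definition DD :: "'a::linorder \<Rightarrow> 'a \<Rightarrow> 'a \<Rightarrow> 'a \<Rightarrow> int" where
  "DD x a b y = (if ccwL x b y then 1 else 0) - (if ccwL x a y then 1 else 0)"
lemma DD1: "a < b \<Longrightarrow> a \<le> y \<Longrightarrow> y < b \<Longrightarrow> DD x a b y = DD x a b a"
  unfolding DD_def ccwL_alt
  by (cases x a rule: linorder_cases; cases x b rule: linorder_cases; cases x y rule: linorder_cases) auto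
lemma DD2: "a < b \<Longrightarrow> \<not>(a \<le> y \<and> y < b) \<Longrightarrow> DD x a b y = DD x a b b"
  unfolding DD_def ccwL_alt
  by (cases x a rule: linorder_cases; cases x b rule: linorder_cases; cases x y rule: linorder_cases) auto
lemma DD3: "b < a \<Longrightarrow> b \<le> y \<Longrightarrow> y < a \<Longrightarrow> DD x a b y = DD x a b b"
  unfolding DD_def ccwL_alt
  by (cases x a rule: linorder_cases; cases x b rule: linorder_cases; cases x y rule: linorder_cases) auto
lemma DD4: "b < a \<Longrightarrow> \<not>(b \<le> y \<and> y < a) \<Longrightarrow> DD x a b y = DD x a b a"
  unfolding DD_def ccwL_alt
  by (cases x a rule: linorder_cases; cases x b rule: linorder_cases; cases x y rule: linorder_cases) auto

lemma ccwL_lem2: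
  assumes "ccwL a b c = ccwL a b d"
  shows "(if ccwL x b d then 1 else 0::int) + (if ccwL x a c then 1 else 0)
       = (if ccwL x b c then 1 else 0) + (if ccwL x a d then 1 else 0)"
proof -
  have "DD x a b c = DD x a b d"
  proof (cases a b rule: linorder_cases)
    case less
    then show ?thesis using assms DD1[of a b c x] DD1[of a b d x] DD2[of a b c x] DD2[of a b d x] unfolding ccwL_alt
      by (cases "a \<le> c \<and> c < b"; cases "a \<le> d \<and> d < b") auto
  next
    case equal then show ?thesis by (simp add: DD_def)
  next
    case greater
    then have "\<not> a < b" by simp
    with greater show ?thesis using assms DD3[of b a c x] DD3[of b a d x] DD4[of b a c x] DD4[of b a d x] unfolding ccwL_alt
      by (cases "b \<le> c \<and> c < a"; cases "b \<le> d \<and> d < a") auto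
  qed
  then show ?thesis unfolding DD_def by linarith
qed

lemma ccw_eq: "ccw = ccwL"
  by (intro ext) (simp add: ccw_def ccwL_def)

lemma ccw_lem1: "ccw a b c \<noteq> ccw a b d \<Longrightarrow> ccw b a d = ccw a b c"
  unfolding ccw_eq by (rule ccwL_lem1)
lemma ccw_lem2: "ccw a b c = ccw a b d \<Longrightarrow> (if ccw x b d then 1 else 0::int) + (if ccw x a c then 1 else 0)
       = (if ccw x b c then 1 else 0) + (if ccw x a d then 1 else 0)"
  unfolding ccw_eq by (rule ccwL_lem2)
lemma ccw_lem0: "a \<noteq> b \<Longrightarrow> ccw b a c = (\<not> ccw a b c)"
  unfolding ccw_eq ccwL_alt by (cases a b rule: linorder_cases) auto

definition psi :: "nat \<Rightarrow> nat \<Rightarrow> nat \<Rightarrow> nat \<times> nat \<Rightarrow> nat \<times> nat" where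
  "psi i r k = (\<lambda>(a, s). if r \<le> s \<and> s \<le> k \<and> a = i then (i + 1, s)
      else if r \<le> s \<and> s \<le> k \<and> a = i + 1 then (i, s) else (a, s))"

lemma psi_simp: "psi i r k (a, s) = (if r \<le> s \<and> s \<le> k \<and> a = i then (i + 1, s)
      else if r \<le> s \<and> s \<le> k \<and> a = i + 1 then (i, s) else (a, s))"
  by (simp add: psi_def)

lemma snd_psi: "snd (psi i r k c) = snd c"
  by (cases c) (simp add: psi_def)

lemma val_comp: "val (\<sigma> \<circ> psi i r k) c = val \<sigma> (psi i r k c)"
  by (simp add: val_def snd_psi)

definition Cch :: "(nat \<times> nat \<Rightarrow> nat) \<Rightarrow> nat \<Rightarrow> nat \<Rightarrow> bool" where
  "Cch \<sigma> i s \<longleftrightarrow> ccw (val \<sigma> (i+1,s)) (val \<sigma> (i,s)) (val \<sigma> (i,s-1)) \<noteq>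
      ccw (val \<sigma> (i+1,s)) (val \<sigma> (i,s)) (val \<sigma> (i+1,s-1))"

definition Stp :: "nat list \<Rightarrow> (nat \<times> nat \<Rightarrow> nat) \<Rightarrow> nat \<Rightarrow> nat \<Rightarrow> bool" where
  "Stp lam \<sigma> i k \<longleftrightarrow> ((i+1,k+1) \<in> dg lam \<longrightarrow> (i,k+1) \<in> dg lam \<longrightarrow>
      ccw (val \<sigma> (i+1,k+1)) (val \<sigma> (i,k+1)) (val \<sigma> (i,k)) =
      ccw (val \<sigma> (i+1,k+1)) (val \<sigma> (i,k+1)) (val \<sigma> (i+1,k)))"

lemma loop:
  "sb = \<sigma> \<circ> psi i r0 (m-1) \<Longrightarrow> sa = \<sigma> \<circ> psi i r0 m \<Longrightarrow> r0 \<le> m \<Longrightarrow> 1 \<le> r0 \<Longrightarrow>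
   (i+1,m) \<in> dg lam \<Longrightarrow>
   \<exists>k\<ge>m. T_loop lam i sb sa m = \<sigma> \<circ> psi i r0 k \<and> (i+1,k) \<in> dg lam \<and>
      (\<forall>s. m < s \<and> s \<le> k \<longrightarrow> Cch \<sigma> i s) \<and> Stp lam \<sigma> i k"
proof (induction lam i sb sa m rule: T_loop.induct)
  case (1 lam i sb sa m)
  have v1: "val sb (i+1, m+1) = val \<sigma> (i+1, m+1)" "val sa (i+1, m+1) = val \<sigma> (i+1, m+1)"
    "val sb (i, m+1) = val \<sigma> (i, m+1)" "val sa (i, m+1) = val \<sigma> (i, m+1)"
    "val sb (i, m) = val \<sigma> (i, m)" "val sa (i, m) = val \<sigma> (i+1, m)"
    unfolding "1.prems"(1,2) val_comp using "1.prems"(3,4) by (auto simp: psi_simp)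
  show ?case
  proof (cases "(i + 1, m + 1) \<notin> dg lam \<or> (i, m + 1) \<notin> dg lam")
    case True
    then show ?thesis using "1.prems" by (auto simp: Stp_def)
  next
    case F1: False
    show ?thesis
    proof (cases "ccw (val sb (i + 1, m + 1)) (val sb (i, m + 1)) (val sb (i, m)) =
              ccw (val sa (i + 1, m + 1)) (val sa (i, m + 1)) (val sa (i, m))")
      case True
      then have "T_loop lam i sb sa m = sa" using F1 by simp
      moreover have "Stp lam \<sigma> i m" using True v1 by (simp add: Stp_def)
      ultimately show ?thesis using "1.prems" by auto
    next
      case False
      have eq: "T_loop lam i sb sa m = T_loop lam i sa (swap_cells sa i (m + 1)) (m + 1)"
        using F1 False by simp
      have sw: "swap_cells sa i (m + 1) = \<sigma> \<circ> psi i r0 (m+1)"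
        using "1.prems" by (auto simp: swap_cells_def psi_def fun_eq_iff)
      have ih: "\<exists>k\<ge>m+1. T_loop lam i sa (swap_cells sa i (m + 1)) (m + 1) = \<sigma> \<circ> psi i r0 k \<and>
        (i+1,k) \<in> dg lam \<and> (\<forall>s. m+1 < s \<and> s \<le> k \<longrightarrow> Cch \<sigma> i s) \<and> Stp lam \<sigma> i k"
        apply (rule "1.IH"[OF F1 False])
            apply (simp add: "1.prems"(2))
           apply (rule sw)
        using "1.prems" F1 by auto
      then obtain k where k: "k \<ge> m+1" "T_loop lam i sa (swap_cells sa i (m + 1)) (m + 1) = \<sigma> \<circ> psi i r0 k"
        "(i+1,k) \<in> dg lam" "\<forall>s. m+1 < s \<and> s \<le> k \<longrightarrow> Cch \<sigma> i s" "Stp lam \<sigma> i k"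
        by blast
      have "Cch \<sigma> i (m+1)" using False v1 by (simp add: Cch_def)
      then have "\<forall>s. m < s \<and> s \<le> k \<longrightarrow> Cch \<sigma> i s" using k(4)
        by (metis Suc_eq_plus1 Suc_lessI)
      then show ?thesis using k eq by (intro exI[of _ k]) auto
    qed
  qed
qed

lemma Top_char:
  assumes "(i+1,r) \<in> dg lam" "1 \<le> r"
  shows "\<exists>k\<ge>r. T_op lam i r \<sigma> = \<sigma> \<circ> psi i r k \<and> (i+1,k) \<in> dg lam \<and>
      (\<forall>s. r < s \<and> s \<le> k \<longrightarrow> Cch \<sigma> i s) \<and> Stp lam \<sigma> i k"
proof -
  have e1: "\<sigma> = \<sigma> \<circ> psi i r (r-1)" using assms(2) by (auto simp: psi_def fun_eq_iff)
  have e2: "swap_cells \<sigma> i r = \<sigma> \<circ> psi i r r" by (auto simp: swap_cells_def psi_def fun_eq_iff)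
  show ?thesis unfolding T_op_def by (rule loop[OF e1 e2 order.refl assms(2) assms(1)])
qed

definition PP :: "nat list \<Rightarrow> (nat \<times> nat \<times> nat) set" where
  "PP lam = {(u, v, s). u < v \<and> 1 \<le> s \<and> (v, s) \<in> dg lam \<and> (u, s) \<in> dg lam}"

definition FF :: "(nat \<times> nat \<Rightarrow> nat) \<Rightarrow> nat \<times> nat \<times> nat \<Rightarrow> int" where
  "FF \<sigma> p = (case p of (u, v, s) \<Rightarrow>
     if ccw (val \<sigma> (v, s)) (val \<sigma> (u, s)) (val \<sigma> (u, s - 1)) then 1 else 0)"

lemma FF_simp: "FF \<sigma> (u, v, s) = (if ccw (val \<sigma> (v, s)) (val \<sigma> (u, s)) (val \<sigma> (u, s - 1)) then 1 else 0)"
  by (simp add: FF_def)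

lemma finite_PP: "finite (PP lam)"
proof -
  have "PP lam \<subseteq> {..length lam} \<times> {..length lam} \<times> {..sum_list lam}"
  proof
    fix p assume "p \<in> PP lam"
    then obtain u v s where p: "p = (u,v,s)" "u < v" "(v,s) \<in> dg lam" by (auto simp: PP_def)
    then have "v \<le> length lam" "s \<le> lam ! (v-1)" "1 \<le> v" by (auto simp: dg_def)
    moreover have "lam ! (v-1) \<le> sum_list lam" using \<open>v \<le> length lam\<close> \<open>1 \<le> v\<close>
      by (intro elem_le_sum_list) simp
    ultimately show "p \<in> {..length lam} \<times> {..length lam} \<times> {..sum_list lam}" using p by auto
  qed
  then show ?thesis by (rule finite_subset) auto
qed

lemma inv_sum: "int (inv lam \<sigma>) = (\<Sum>p\<in>PP lam. FF \<sigma> p)"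
proof -
  have "inv_triples lam \<sigma> = {p \<in> PP lam. FF \<sigma> p = 1}"
    by (auto simp: inv_triples_def PP_def FF_def split: if_splits)
  then have "int (inv lam \<sigma>) = (\<Sum>p\<in>{p \<in> PP lam. FF \<sigma> p = 1}. 1)" by (simp add: inv_def)
  also have "\<dots> = (\<Sum>p\<in>PP lam. if FF \<sigma> p = 1 then 1 else 0)"
    by (rule sum.inter_filter[OF finite_PP])
  also have "\<dots> = (\<Sum>p\<in>PP lam. FF \<sigma> p)"
    by (rule sum.cong) (auto simp: FF_def split: prod.splits)
  finally show ?thesis .
qed

lemma dg_mono:
  assumes "is_partition lam" "(b, s) \<in> dg lam" "1 \<le> a" "a \<le> b"
  shows "(a, s) \<in> dg lam"
proof (cases "a = b")
  case False
  then have "lam ! (b-1) \<le> lam ! (a-1)"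
    using assms sorted_wrt_nth_less[of "(\<ge>)" lam "a-1" "b-1"] by (auto simp: is_partition_def dg_def)
  then show ?thesis using assms by (auto simp: dg_def)
qed (use assms in auto)

definition phi :: "nat list \<Rightarrow> nat \<Rightarrow> nat \<times> nat \<times> nat \<Rightarrow> nat \<times> nat \<times> nat" where
  "phi lam i = (\<lambda>(u, v, s). if u \<noteq> i \<and> u \<noteq> i+1 \<and> v = i \<and> (i+1, s) \<in> dg lam then (u, i+1, s)
     else if u \<noteq> i \<and> u \<noteq> i+1 \<and> v = i+1 then (u, i, s)
     else if u = i \<and> v \<noteq> i \<and> v \<noteq> i+1 then (i+1, v, s)
     else if u = i+1 \<and> v \<noteq> i \<and> v \<noteq> i+1 then (i, v, s) else (u, v, s))"

lemma phi_simp: "phi lam i (u, v, s) = (if u \<noteq> i \<and> u \<noteq> i+1 \<and> v = i \<and> (i+1, s) \<in> dg lam then (u, i+1, s)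
     else if u \<noteq> i \<and> u \<noteq> i+1 \<and> v = i+1 then (u, i, s)
     else if u = i \<and> v \<noteq> i \<and> v \<noteq> i+1 then (i+1, v, s)
     else if u = i+1 \<and> v \<noteq> i \<and> v \<noteq> i+1 then (i, v, s) else (u, v, s))"
  by (simp add: phi_def)

lemma phi_bij:
  assumes "is_partition lam" "1 \<le> i"
  shows "bij_betw (phi lam i) (PP lam) (PP lam)"
proof (rule bij_betw_byWitness[where f' = "phi lam i"])
  show "\<forall>a\<in>PP lam. phi lam i (phi lam i a) = a"
    by (auto simp: PP_def phi_simp)
  then show "\<forall>a\<in>PP lam. phi lam i (phi lam i a) = a" .
  show "phi lam i ` PP lam \<subseteq> PP lam"
  proof
    fix q assume "q \<in> phi lam i ` PP lam"
    then obtain u v s where p: "(u,v,s) \<in> PP lam" "q = phi lam i (u,v,s)" by auto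
    from p(1) have h: "u < v" "1 \<le> s" "(v,s) \<in> dg lam" "(u,s) \<in> dg lam" by (auto simp: PP_def)
    then have u1: "1 \<le> u" by (auto simp: dg_def)
    show "q \<in> PP lam"
      using h u1 assms p(2) dg_mono[OF assms(1) h(3), of i] dg_mono[OF assms(1) h(3), of "i+1"]
      by (auto simp: PP_def phi_simp)
  qed
  then show "phi lam i ` PP lam \<subseteq> PP lam" .
qed

lemma dg_down: "(a, s) \<in> dg lam \<Longrightarrow> 1 \<le> s' \<Longrightarrow> s' \<le> s \<Longrightarrow> (a, s') \<in> dg lam"
  by (auto simp: dg_def)

lemma pointwise:
  assumes part: "is_partition lam" and i1: "1 \<le> i" and r1: "1 \<le> r" and rk: "r \<le> k"
    and dgk: "(i+1,k) \<in> dg lam"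
    and below: "\<forall>s<r. val \<sigma> (i,s) = val \<sigma> (i+1,s)"
    and cch: "\<forall>s. r < s \<and> s \<le> k \<longrightarrow> Cch \<sigma> i s"
    and stp: "Stp lam \<sigma> i k"
    and p: "(u,v,s) \<in> PP lam" and np: "(u,v,s) \<noteq> (i,i+1,r)"
  shows "FF (\<sigma> \<circ> psi i r k) (u,v,s) + FF (\<sigma> \<circ> psi i r k) (phi lam i (u,v,s))
       = FF \<sigma> (u,v,s) + FF \<sigma> (phi lam i (u,v,s))"
proof -
  let ?V = "val \<sigma>"
  let ?G = "FF (\<sigma> \<circ> psi i r k)"
  from p have uv: "u < v" and s1: "1 \<le> s" and vs: "(v,s) \<in> dg lam" and us: "(u,s) \<in> dg lam"
    by (auto simp: PP_def)
  have pw: "psi i r k (w,t) = (w,t)" if "w \<noteq> i" "w \<noteq> i+1" for w t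
    using that by (simp add: psi_simp)
  have pin: "psi i r k (i,t) = (i+1,t)" "psi i r k (i+1,t) = (i,t)" if "r \<le> t" "t \<le> k" for t
    using that by (simp_all add: psi_simp)
  have pout: "psi i r k (i,t) = (i,t)" "psi i r k (i+1,t) = (i+1,t)" if "\<not> (r \<le> t \<and> t \<le> k)" for t
    using that by (simp_all add: psi_simp)
  have right: "?G (i,w,s) + ?G (i+1,w,s) = FF \<sigma> (i,w,s) + FF \<sigma> (i+1,w,s)"
    if w: "i+1 < w" "(w,s) \<in> dg lam" for w
  proof -
    have nw: "w \<noteq> i" "w \<noteq> i+1" using w by auto
    note pww = pw[OF nw]
    consider (lt) "s < r" | (eq) "s = r" | (mid) "r < s \<and> s \<le> k" | (top) "s = k+1" | (gt) "s > k+1"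
      by linarith
    then show ?thesis
    proof cases
      case lt
      have "\<not> (r \<le> s \<and> s \<le> k)" "\<not> (r \<le> s-1 \<and> s-1 \<le> k)" using lt by auto
      note ps = pout[OF this(1)] pout[OF this(2)]
      show ?thesis by (simp only: FF_simp val_comp ps pww)
    next
      case eq
      have b: "?V (i, s-1) = ?V (i+1, s-1)" using below r1 eq by auto
      have "r \<le> s \<and> s \<le> k" "\<not> (r \<le> s-1 \<and> s-1 \<le> k)" using eq r1 rk by auto
      note ps = pin[OF conjunct1[OF this(1)] conjunct2[OF this(1)]] pout[OF this(2)]
      show ?thesis by (simp only: FF_simp val_comp ps pww b; simp?)
    next
      case mid
      have "r \<le> s" "s \<le> k" "r \<le> s-1" "s-1 \<le> k" using mid by auto
      note ps = pin[OF this(1,2)] pin[OF this(3,4)]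
      show ?thesis by (simp only: FF_simp val_comp ps pww; simp?)
    next
      case top
      have d1: "(i+1,k+1) \<in> dg lam" using dg_mono[OF part w(2), of "i+1"] top w by auto
      have d2: "(i,k+1) \<in> dg lam" using dg_mono[OF part w(2), of "i"] top w i1 by auto
      have st: "ccw (?V (i+1,k+1)) (?V (i,k+1)) (?V (i,k)) = ccw (?V (i+1,k+1)) (?V (i,k+1)) (?V (i+1,k))"
        using stp d1 d2 by (simp add: Stp_def)
      have ps: "psi i r k (i,k+1) = (i,k+1)" "psi i r k (i+1,k+1) = (i+1,k+1)"
        "psi i r k (i,k) = (i+1,k)" "psi i r k (i+1,k) = (i,k)" using rk by (simp_all add: psi_simp)
      show ?thesis using ccw_lem2[OF st, of "?V (w,k+1)"]
        by (simp only: FF_simp val_comp ps pww top add_diff_cancel_right')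
    next
      case gt
      have "\<not> (r \<le> s \<and> s \<le> k)" "\<not> (r \<le> s-1 \<and> s-1 \<le> k)" using gt by auto
      note ps = pout[OF this(1)] pout[OF this(2)]
      show ?thesis by (simp only: FF_simp val_comp ps pww)
    qed
  qed
  have left: "?G (w,i,s) + ?G (w,i+1,s) = FF \<sigma> (w,i,s) + FF \<sigma> (w,i+1,s)"
    if w: "w < i" for w
  proof -
    have nw: "w \<noteq> i" "w \<noteq> i+1" using w by auto
    note pww = pw[OF nw]
    show ?thesis
    proof (cases "r \<le> s \<and> s \<le> k")
      case True
      note ps = pin[OF conjunct1[OF True] conjunct2[OF True]]
      show ?thesis by (simp only: FF_simp val_comp ps pww; simp?)
    next
      case False
      note ps = pout[OF False]
      show ?thesis by (simp only: FF_simp val_comp ps pww)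
    qed
  qed
  consider (A) "u \<noteq> i \<and> u \<noteq> i+1 \<and> v \<noteq> i \<and> v \<noteq> i+1" | (B) "u = i \<and> v = i+1"
    | (C) "u \<noteq> i \<and> u \<noteq> i+1 \<and> v = i" | (D) "u \<noteq> i \<and> u \<noteq> i+1 \<and> v = i+1"
    | (E) "u = i \<and> v \<noteq> i \<and> v \<noteq> i+1" | (F) "u = i+1 \<and> v \<noteq> i \<and> v \<noteq> i+1"
    using uv by force
  then show ?thesis
  proof cases
    case A
    then have ph: "phi lam i (u,v,s) = (u,v,s)" by (simp add: phi_simp)
    have ps: "psi i r k (v,s) = (v,s)" "psi i r k (u,s) = (u,s)" "psi i r k (u,s-1) = (u,s-1)"
      using A pw by auto
    have "?G (u,v,s) = FF \<sigma> (u,v,s)" by (simp only: FF_simp val_comp ps)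
    then show ?thesis by (simp only: ph)
  next
    case B
    then have ph: "phi lam i (u,v,s) = (u,v,s)" by (simp add: phi_simp)
    have "?G (i,i+1,s) = FF \<sigma> (i,i+1,s)"
    proof -
      consider (lt) "s < r" | (eq) "s = r" | (mid) "r < s \<and> s \<le> k" | (top) "s = k+1" | (gt) "s > k+1"
        by linarith
      then show ?thesis
      proof cases
        case lt
        have "\<not> (r \<le> s \<and> s \<le> k)" "\<not> (r \<le> s-1 \<and> s-1 \<le> k)" using lt by auto
        note ps = pout[OF this(1)] pout[OF this(2)]
        show ?thesis by (simp only: FF_simp val_comp ps)
      next
        case eq then show ?thesis using np B by simp
      next
        case mid
        have "Cch \<sigma> i s" using cch mid by auto
        then have c: "ccw (?V (i,s)) (?V (i+1,s)) (?V (i+1,s-1)) = ccw (?V (i+1,s)) (?V (i,s)) (?V (i,s-1))"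
          unfolding Cch_def by (rule ccw_lem1)
        have "r \<le> s" "s \<le> k" "r \<le> s-1" "s-1 \<le> k" using mid by auto
        note ps = pin[OF this(1,2)] pin[OF this(3,4)]
        show ?thesis by (simp only: FF_simp val_comp ps c)
      next
        case top
        have st: "ccw (?V (i+1,k+1)) (?V (i,k+1)) (?V (i,k)) = ccw (?V (i+1,k+1)) (?V (i,k+1)) (?V (i+1,k))"
          using stp vs us B top by (simp add: Stp_def)
        have ps: "psi i r k (i,k+1) = (i,k+1)" "psi i r k (i+1,k+1) = (i+1,k+1)"
          "psi i r k (i,k) = (i+1,k)" "psi i r k (i+1,k) = (i,k)" using rk by (simp_all add: psi_simp)
        show ?thesis using st by (simp only: FF_simp val_comp ps top add_diff_cancel_right')
      next
        case gt
        have "\<not> (r \<le> s \<and> s \<le> k)" "\<not> (r \<le> s-1 \<and> s-1 \<le> k)" using gt by auto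
        note ps = pout[OF this(1)] pout[OF this(2)]
        show ?thesis by (simp only: FF_simp val_comp ps)
      qed
    qed
    moreover have "u = i" "v = i+1" using B by auto
    ultimately show ?thesis using ph by simp
  next
    case C
    have ui: "u < i" using C uv by auto
    show ?thesis
    proof (cases "(i+1,s) \<in> dg lam")
      case True
      then have ph: "phi lam i (u,v,s) = (u,i+1,s)" using C by (simp add: phi_simp)
      have vi: "v = i" using C by simp
      show ?thesis using left[OF ui] unfolding ph unfolding vi by linarith
    next
      case False
      then have ph: "phi lam i (u,v,s) = (u,v,s)" using C by (simp add: phi_simp)
      have "s > k" using False dgk s1 dg_down[OF dgk s1] by (cases "s \<le> k") auto
      then have "\<not> (r \<le> s \<and> s \<le> k)" by auto
      note ps = pout[OF this]
      have nu: "u \<noteq> i" "u \<noteq> i+1" using C by auto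
      have "?G (u,v,s) = FF \<sigma> (u,v,s)" using C by (simp only: FF_simp val_comp ps pw[OF nu])
      then show ?thesis by (simp only: ph)
    qed
  next
    case D
    have ui: "u < i" using D uv by auto
    then have ph: "phi lam i (u,v,s) = (u,i,s)" using D by (simp add: phi_simp)
    have vi: "v = i+1" using D by simp
    show ?thesis using left[OF ui] unfolding ph unfolding vi by linarith
  next
    case E
    then have ph: "phi lam i (u,v,s) = (i+1,v,s)" by (simp add: phi_simp)
    have "i + 1 < v" using E uv by auto
    have vi: "u = i" using E by simp
    show ?thesis using right[OF \<open>i+1<v\<close> vs] unfolding ph unfolding vi by linarith
  next
    case F
    then have ph: "phi lam i (u,v,s) = (i,v,s)" by (simp add: phi_simp)
    have "i + 1 < v" using F uv by auto
    have vi: "u = i+1" using F by simp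
    show ?thesis using right[OF \<open>i+1<v\<close> vs] unfolding ph unfolding vi by linarith
  qed
qed

theorem mainTheorem3:
  fixes lam :: "nat list" and \<sigma> :: "nat \<times> nat \<Rightarrow> nat" and i r :: nat
  assumes "is_partition lam"
    and "is_filling lam \<sigma>"
    and "(i, r) \<in> dg lam" and "(i + 1, r) \<in> dg lam"
    and "\<sigma> (i, r) \<noteq> \<sigma> (i + 1, r)"
    and "\<forall>s. 1 \<le> s \<and> s \<le> r - 1 \<longrightarrow> \<sigma> (i, s) = \<sigma> (i + 1, s)"
  shows "int (inv lam (T_op lam i r \<sigma>)) =
           (if ccw (val \<sigma> (i + 1, r)) (val \<sigma> (i, r)) (val \<sigma> (i, r - 1))
            then int (inv lam \<sigma>) - 1 else int (inv lam \<sigma>) + 1)"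
proof -
  have i1: "1 \<le> i" and r1: "1 \<le> r" using assms(3) by (auto simp: dg_def)
  obtain k where k: "k \<ge> r" "T_op lam i r \<sigma> = \<sigma> \<circ> psi i r k" "(i+1,k) \<in> dg lam"
    "\<forall>s. r < s \<and> s \<le> k \<longrightarrow> Cch \<sigma> i s" "Stp lam \<sigma> i k"
    using Top_char[OF assms(4) r1] by blast
  have below: "\<forall>s<r. val \<sigma> (i,s) = val \<sigma> (i+1,s)"
  proof (intro allI impI)
    fix s assume "s < r"
    then show "val \<sigma> (i,s) = val \<sigma> (i+1,s)" using assms(6) by (cases "s = 0") (auto simp: val_def)
  qed
  define G where "G = FF (\<sigma> \<circ> psi i r k)"
  define F where "F = FF \<sigma>"
  define ph where "ph = phi lam i"
  define p0 where "p0 = (i, i+1, r)"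
  have p0P: "p0 \<in> PP lam" using assms(3,4) r1 by (auto simp: PP_def p0_def)
  have php0: "ph p0 = p0" by (simp add: ph_def p0_def phi_simp)
  have bij: "bij_betw ph (PP lam) (PP lam)" unfolding ph_def by (rule phi_bij[OF assms(1) i1])
  have sG: "(\<Sum>p\<in>PP lam. G (ph p)) = (\<Sum>p\<in>PP lam. G p)" by (rule sum.reindex_bij_betw[OF bij])
  have sF: "(\<Sum>p\<in>PP lam. F (ph p)) = (\<Sum>p\<in>PP lam. F p)" by (rule sum.reindex_bij_betw[OF bij])
  have pt: "G p + G (ph p) - (F p + F (ph p)) = (if p = p0 then 2 * (G p0 - F p0) else 0)"
    if "p \<in> PP lam" for p
  proof (cases "p = p0")
    case True then show ?thesis using php0 by simp
  next
    case False
    obtain u v s where p: "p = (u,v,s)" by (cases p) auto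
    have "G p + G (ph p) = F p + F (ph p)"
      unfolding G_def F_def ph_def p
      by (rule pointwise[OF assms(1) i1 r1 k(1) k(3) below k(4) k(5)]) (use that False p p0_def in auto)
    then show ?thesis using False by simp
  qed
  have "(\<Sum>p\<in>PP lam. G p + G (ph p) - (F p + F (ph p))) = (\<Sum>p\<in>PP lam. if p = p0 then 2 * (G p0 - F p0) else 0)"
    by (rule sum.cong) (simp_all add: pt)
  also have "\<dots> = 2 * (G p0 - F p0)" using p0P finite_PP by simp
  finally have "(\<Sum>p\<in>PP lam. G p + G (ph p) - (F p + F (ph p))) = 2 * (G p0 - F p0)" .
  moreover have "(\<Sum>p\<in>PP lam. G p + G (ph p) - (F p + F (ph p))) =
      2 * (\<Sum>p\<in>PP lam. G p) - 2 * (\<Sum>p\<in>PP lam. F p)"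
    by (simp add: sum_subtractf sum.distrib sG sF)
  ultimately have "2 * (\<Sum>p\<in>PP lam. G p) - 2 * (\<Sum>p\<in>PP lam. F p) = 2 * (G p0 - F p0)" by simp
  moreover have "\<And>a b c::int. 2*a - 2*b = 2*c \<Longrightarrow> a = b + c" by linarith
  ultimately have main: "(\<Sum>p\<in>PP lam. G p) = (\<Sum>p\<in>PP lam. F p) + (G p0 - F p0)" by blast
  have ne: "val \<sigma> (i+1, r) \<noteq> val \<sigma> (i, r)" using assms(5) r1 by (auto simp: val_def)
  have ps: "psi i r k (i,r) = (i+1,r)" "psi i r k (i+1,r) = (i,r)" "psi i r k (i,r-1) = (i,r-1)"
    using k(1) r1 by (auto simp: psi_simp)
  have Gp0: "G p0 = (if ccw (val \<sigma> (i,r)) (val \<sigma> (i+1,r)) (val \<sigma> (i,r-1)) then 1 else 0)"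
    unfolding G_def p0_def by (simp only: FF_simp val_comp ps)
  have Fp0: "F p0 = (if ccw (val \<sigma> (i+1,r)) (val \<sigma> (i,r)) (val \<sigma> (i,r-1)) then 1 else 0)"
    unfolding F_def p0_def by (simp only: FF_simp)
  have l0: "ccw (val \<sigma> (i,r)) (val \<sigma> (i+1,r)) (val \<sigma> (i,r-1)) =
      (\<not> ccw (val \<sigma> (i+1,r)) (val \<sigma> (i,r)) (val \<sigma> (i,r-1)))"
    by (rule ccw_lem0[OF ne])
  have "int (inv lam (T_op lam i r \<sigma>)) = (\<Sum>p\<in>PP lam. G p)" unfolding k(2) G_def by (rule inv_sum)
  moreover have "int (inv lam \<sigma>) = (\<Sum>p\<in>PP lam. F p)" unfolding F_def by (rule inv_sum)
  ultimately show ?thesis using main Gp0 Fp0 l0 by auto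
qed
end
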